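(* If $p=p(n)\to0$ and $np\to\infty$ as $n\to\infty$, then a.a.s. $\Gamma\in G(n,p)$ has no domination diamonds.
   Context: $G(n,p)$ is the Erdős–Rényi random graph on $n$ vertices with each edge present independently with probability $p$; a.a.s. means with probability tending to $1$. For distinct vertices $x,y$, $x>y$ means every neighbour of $y$ is adjacent to or equal to $x$. A domination diamond is a quadruple $(a,b,c,d)$ of distinct vertices with $a\sim b\sim c\sim d\sim a$, $a\not\sim c$, $b\not\sim d$, and $a>c$. *)

theory Defs
  imports Complex_Main
begin

text \<open>Graphs on the vertex set {0..<n}: a graph is a set of edges, each edge a
2-element subset of {0..<n}.\<close>

definition all_edges :: "nat \<Rightarrow> nat set set" where
  "all_edges n = {e. e \<subseteq> {..<n} \<and> card e = 2}"

definition adj :: "nat set set \<Rightarrow> nat \<Rightarrow> nat \<Rightarrow> bool" where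
  "adj E x y \<longleftrightarrow> {x, y} \<in> E"

definition dominates :: "nat set set \<Rightarrow> nat \<Rightarrow> nat \<Rightarrow> bool" where
  "dominates E x y \<longleftrightarrow> x \<noteq> y \<and> (\<forall>z. adj E y z \<longrightarrow> adj E x z \<or> z = x)"

definition dom_diamond :: "nat \<Rightarrow> nat set set \<Rightarrow> nat \<Rightarrow> nat \<Rightarrow> nat \<Rightarrow> nat \<Rightarrow> bool" where
  "dom_diamond n E a b c d \<longleftrightarrow>
     a < n \<and> b < n \<and> c < n \<and> d < n \<and> distinct [a, b, c, d] \<and>
     adj E a b \<and> adj E b c \<and> adj E c d \<and> adj E d a \<and>
     \<not> adj E a c \<and> \<not> adj E b d \<and> dominates E a c"

definition has_dom_diamond :: "nat \<Rightarrow> nat set set \<Rightarrow> bool" where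
  "has_dom_diamond n E \<longleftrightarrow> (\<exists>a b c d. dom_diamond n E a b c d)"

definition Gnp_prob :: "nat \<Rightarrow> real \<Rightarrow> (nat set set \<Rightarrow> bool) \<Rightarrow> real" where
  "Gnp_prob n p P =
     (\<Sum>E\<in>Pow (all_edges n). if P E
        then p ^ card E * (1 - p) ^ (card (all_edges n) - card E) else 0)"

end

theory Submission
  imports Defs "HOL-Real_Asymp.Real_Asymp"
begin

definition wt :: "real \<Rightarrow> 'a set \<Rightarrow> 'a set \<Rightarrow> real" where
  "wt p U E = (\<Prod>e\<in>U. if e \<in> E then p else 1 - p)"

definition W :: "real \<Rightarrow> 'a set \<Rightarrow> ('a set \<Rightarrow> bool) \<Rightarrow> real" where
  "W p U P = (\<Sum>E\<in>Pow U. if P E then wt p U E else 0)"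

lemma wt_nonneg: "0 \<le> p \<Longrightarrow> p \<le> 1 \<Longrightarrow> 0 \<le> wt p U E"
  unfolding wt_def by (intro prod_nonneg) auto

lemma W_split:
  assumes f: "finite U1" "finite U2" and dj: "U1 \<inter> U2 = {}"
    and P: "\<And>E. E \<subseteq> U1 \<union> U2 \<Longrightarrow> P E \<longleftrightarrow> P1 (E \<inter> U1) \<and> P2 (E \<inter> U2)"
  shows "W p (U1 \<union> U2) P = W p U1 P1 * W p U2 P2"
proof -
  let ?h = "\<lambda>(A, B). A \<union> B"
  have inj: "inj_on ?h (Pow U1 \<times> Pow U2)"
    using dj by (auto simp: inj_on_def) blast+
  have img: "Pow (U1 \<union> U2) = ?h ` (Pow U1 \<times> Pow U2)"
  proof
    show "Pow (U1 \<union> U2) \<subseteq> ?h ` (Pow U1 \<times> Pow U2)"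
    proof
      fix X assume "X \<in> Pow (U1 \<union> U2)"
      then have "X = ?h (X \<inter> U1, X \<inter> U2)" by auto
      then show "X \<in> ?h ` (Pow U1 \<times> Pow U2)" by blast
    qed
  qed auto
  have wt: "wt p (U1 \<union> U2) (A \<union> B) = wt p U1 A * wt p U2 B"
    if "A \<subseteq> U1" "B \<subseteq> U2" for A B
  proof -
    have "wt p (U1 \<union> U2) (A \<union> B) = (\<Prod>e\<in>U1. if e \<in> A \<union> B then p else 1 - p) * (\<Prod>e\<in>U2. if e \<in> A \<union> B then p else 1 - p)"
      unfolding wt_def using f dj by (simp add: prod.union_disjoint)
    also have "(\<Prod>e\<in>U1. if e \<in> A \<union> B then p else 1 - p) = wt p U1 A"
      unfolding wt_def using that dj by (intro prod.cong) auto
    also have "(\<Prod>e\<in>U2. if e \<in> A \<union> B then p else 1 - p) = wt p U2 B"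
      unfolding wt_def using that dj by (intro prod.cong) auto
    finally show ?thesis .
  qed
  have PP: "P (A \<union> B) \<longleftrightarrow> P1 A \<and> P2 B" if "A \<subseteq> U1" "B \<subseteq> U2" for A B
  proof -
    have "(A \<union> B) \<inter> U1 = A" "(A \<union> B) \<inter> U2 = B" using that dj by auto
    then show ?thesis using P[of "A \<union> B"] that by auto
  qed
  have "W p (U1 \<union> U2) P = (\<Sum>x\<in>Pow U1 \<times> Pow U2. if P (?h x) then wt p (U1 \<union> U2) (?h x) else 0)"
    unfolding W_def img by (subst sum.reindex[OF inj]) (simp add: comp_def)
  also have "\<dots> = (\<Sum>(A,B)\<in>Pow U1 \<times> Pow U2. (if P1 A then wt p U1 A else 0) * (if P2 B then wt p U2 B else 0))"
    by (intro sum.cong refl) (auto simp: wt PP)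
  also have "\<dots> = W p U1 P1 * W p U2 P2"
    unfolding W_def sum_product sum.cartesian_product by simp
  finally show ?thesis .
qed

lemma W_blocks:
  assumes "finite J" "\<And>j. j \<in> J \<Longrightarrow> finite (B j)" "\<And>i k. i \<in> J \<Longrightarrow> k \<in> J \<Longrightarrow> i \<noteq> k \<Longrightarrow> B i \<inter> B k = {}"
  shows "W p (\<Union>j\<in>J. B j) (\<lambda>E. \<forall>j\<in>J. Q j (E \<inter> B j)) = (\<Prod>j\<in>J. W p (B j) (Q j))"
  using assms
proof (induction J rule: finite_induct)
  case empty
  then show ?case by (simp add: W_def wt_def)
next
  case (insert j J)
  have dfJ: "\<And>i k. i \<in> J \<Longrightarrow> k \<in> J \<Longrightarrow> i \<noteq> k \<Longrightarrow> B i \<inter> B k = {}" using insert.prems(2) by auto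
  have dj: "B j \<inter> (\<Union>i\<in>J. B i) = {}" using insert.prems(2) insert.hyps(2)
    by blast
  have "W p (B j \<union> (\<Union>i\<in>J. B i)) (\<lambda>E. \<forall>i\<in>insert j J. Q i (E \<inter> B i))
      = W p (B j) (Q j) * W p (\<Union>i\<in>J. B i) (\<lambda>E. \<forall>i\<in>J. Q i (E \<inter> B i))"
  proof (rule W_split)
    show "finite (B j)" "finite (\<Union>i\<in>J. B i)" using insert by auto
    show "B j \<inter> (\<Union>i\<in>J. B i) = {}" by (rule dj)
    fix E
    have "E \<inter> (\<Union>i\<in>J. B i) \<inter> B i = E \<inter> B i" if "i \<in> J" for i using that by auto
    then show "(\<forall>i\<in>insert j J. Q i (E \<inter> B i)) \<longleftrightarrow> Q j (E \<inter> B j) \<and> (\<forall>i\<in>J. Q i (E \<inter> (\<Union>i\<in>J. B i) \<inter> B i))"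
      by auto
  qed
  then show ?case using insert by simp
qed

lemma W_single_true: "W p {e} (\<lambda>_. True) = 1"
proof -
  have "Pow {e} = {{}, {e}}" by blast
  then show ?thesis by (simp add: W_def wt_def)
qed

lemma W_true: assumes "finite V" shows "W p V (\<lambda>_. True) = 1"
proof -
  have "W p (\<Union>e\<in>V. {e}) (\<lambda>E. \<forall>e\<in>V. (\<lambda>_. True) (E \<inter> {e})) = (\<Prod>e\<in>V. W p {e} (\<lambda>_. True))"
    by (rule W_blocks) (use assms in auto)
  then show ?thesis by (simp add: W_single_true)
qed

lemma W_single: "W p {e} (\<lambda>F. e \<in> F) = p"
proof -
  have "Pow {e} = {{}, {e}}" by blast
  then show ?thesis by (simp add: W_def wt_def)
qed

lemma W_pair: assumes "e1 \<noteq> e2" shows "W p {e1, e2} (\<lambda>F. e1 \<in> F \<longrightarrow> e2 \<in> F) = 1 - p + p^2"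
proof -
  have "Pow {e1, e2} = {{}, {e1}, {e2}, {e1, e2}}" by (auto simp: Pow_def)
  then show ?thesis using assms by (simp add: W_def wt_def power2_eq_square algebra_simps)
qed


lemma W_nonneg: "0 \<le> p \<Longrightarrow> p \<le> 1 \<Longrightarrow> 0 \<le> W p U P"
  unfolding W_def by (intro sum_nonneg) (auto intro: wt_nonneg)

lemma W_mono:
  assumes "0 \<le> p" "p \<le> 1" "\<And>E. E \<subseteq> U \<Longrightarrow> P E \<Longrightarrow> Q E"
  shows "W p U P \<le> W p U Q"
  unfolding W_def using assms by (intro sum_mono) (auto intro: wt_nonneg)

lemma W_union:
  assumes "0 \<le> p" "p \<le> 1" "finite I" "finite U"
  shows "W p U (\<lambda>E. \<exists>i\<in>I. P i E) \<le> (\<Sum>i\<in>I. W p U (P i))"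
proof -
  have "W p U (\<lambda>E. \<exists>i\<in>I. P i E) \<le> (\<Sum>E\<in>Pow U. \<Sum>i\<in>I. if P i E then wt p U E else 0)"
    unfolding W_def
  proof (intro sum_mono)
    fix E assume E: "E \<in> Pow U"
    show "(if \<exists>i\<in>I. P i E then wt p U E else 0) \<le> (\<Sum>i\<in>I. if P i E then wt p U E else 0)"
    proof (cases "\<exists>i\<in>I. P i E")
      case True
      then obtain i where i: "i \<in> I" "P i E" by blast
      have "(if P i E then wt p U E else 0) \<le> (\<Sum>i\<in>I. if P i E then wt p U E else 0)"
        by (rule member_le_sum) (use i assms in \<open>auto intro: wt_nonneg\<close>)
      then show ?thesis using True i by simp
    next
      case False
      then show ?thesis using assms by (auto intro!: sum_nonneg wt_nonneg)
    qed
  qed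
  also have "\<dots> = (\<Sum>i\<in>I. W p U (P i))" unfolding W_def by (rule sum.swap)
  finally show ?thesis .
qed

lemma W_compl:
  assumes "finite U"
  shows "W p U (\<lambda>E. \<not> P E) = 1 - W p U P"
proof -
  have "W p U (\<lambda>E. \<not> P E) + W p U P = W p U (\<lambda>_. True)"
    unfolding W_def by (simp add: sum.distrib[symmetric] if_distrib) (intro sum.cong, auto)
  then show ?thesis using W_true[OF assms] by simp
qed

lemma Gnp_W: "Gnp_prob n p P = W p (all_edges n) P"
proof -
  have fin: "finite (all_edges n)" unfolding all_edges_def
    by (rule finite_subset[of _ "Pow {..<n}"]) auto
  have "p ^ card E * (1 - p) ^ (card (all_edges n) - card E) = wt p (all_edges n) E"
    if "E \<subseteq> all_edges n" for E
  proof -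
    have fE: "finite E" using fin that finite_subset by blast
    have "wt p (all_edges n) E = (\<Prod>e\<in>E. p) * (\<Prod>e\<in>all_edges n - E. 1 - p)"
    proof -
      have "all_edges n \<inter> E = E" using that by blast
      moreover have "all_edges n \<inter> - E = all_edges n - E" by blast
      ultimately show ?thesis unfolding wt_def using fin by (simp add: prod.If_cases)
    qed
    also have "\<dots> = p ^ card E * (1 - p) ^ (card (all_edges n) - card E)"
      using that fE by (simp add: card_Diff_subset)
    finally show ?thesis by simp
  qed
  then show ?thesis unfolding Gnp_prob_def W_def by (intro sum.cong) auto
qed


definition DD :: "nat \<Rightarrow> nat \<Rightarrow> nat \<Rightarrow> nat \<Rightarrow> nat \<Rightarrow> nat set set \<Rightarrow> bool" where
  "DD n a b c d E \<longleftrightarrow> distinct [a,b,c,d] \<and> {a,b} \<in> E \<and> {c,b} \<in> E \<and> {a,d} \<in> E \<and> {c,d} \<in> E \<and>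
     (\<forall>z\<in>{..<n} - {a,b,c,d}. {c,z} \<in> E \<longrightarrow> {a,z} \<in> E)"

lemma has_DD:
  assumes "has_dom_diamond n E"
  shows "\<exists>i\<in>{..<n} \<times> {..<n} \<times> {..<n} \<times> {..<n}. (case i of (a,b,c,d) \<Rightarrow> DD n a b c d E)"
proof -
  obtain a b c d where D: "dom_diamond n E a b c d" using assms unfolding has_dom_diamond_def by blast
  have "DD n a b c d E"
    using D unfolding dom_diamond_def DD_def dominates_def adj_def
    by (auto simp: insert_commute)
  then show ?thesis using D unfolding dom_diamond_def by force
qed

lemma edge_in: "x < n \<Longrightarrow> y < n \<Longrightarrow> x \<noteq> y \<Longrightarrow> {x, y} \<in> all_edges n"
  unfolding all_edges_def by auto

lemma fin_edges: "finite (all_edges n)" unfolding all_edges_def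
    by (rule finite_subset[of _ "Pow {..<n}"]) auto

lemma W_DD:
  assumes "a < n" "b < n" "c < n" "d < n" "distinct [a,b,c,d]"
  shows "W p (all_edges n) (DD n a b c d) = p^4 * (1 - p + p^2) ^ (n - 4)"
proof -
  define U where "U = all_edges n"
  define S4 where "S4 = ({{a,b},{c,b},{a,d},{c,d}} :: nat set set)"
  define R where "R = {..<n} - {a,b,c,d}"
  define Bz where "Bz = (\<lambda>z. ({{c,z},{a,z}} :: nat set set))"
  define D2 where "D2 = (\<Union>z\<in>R. Bz z)"
  define P1 where "P1 = (\<lambda>F. \<forall>e\<in>S4. e \<in> F \<inter> {e})"
  define P2 where "P2 = (\<lambda>F. \<forall>z\<in>R. {c,z} \<in> F \<inter> Bz z \<longrightarrow> {a,z} \<in> F \<inter> Bz z)"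
  have finR: "finite R" unfolding R_def by auto
  have finS4: "finite S4" unfolding S4_def by auto
  have finD2: "finite D2" unfolding D2_def Bz_def using finR by auto
  have S4U: "S4 \<subseteq> U" unfolding S4_def U_def using assms by (auto intro!: edge_in)
  have D2U: "D2 \<subseteq> U" unfolding D2_def Bz_def U_def R_def using assms by (auto intro!: edge_in)
  have dj: "S4 \<inter> D2 = {}" unfolding S4_def D2_def Bz_def R_def using assms
    by (auto simp: doubleton_eq_iff)
  have eqU: "U = (S4 \<union> D2) \<union> (U - (S4 \<union> D2))" using S4U D2U by blast
  have "W p U (DD n a b c d) = W p (S4 \<union> D2) (\<lambda>F. P1 (F \<inter> S4) \<and> P2 (F \<inter> D2)) * W p (U - (S4 \<union> D2)) (\<lambda>_. True)"
    apply (subst eqU)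
  proof (rule W_split)
    show "finite (S4 \<union> D2)" "finite (U - (S4 \<union> D2))" using finS4 finD2 fin_edges unfolding U_def by auto
    show "(S4 \<union> D2) \<inter> (U - (S4 \<union> D2)) = {}" by blast
    fix E assume "E \<subseteq> S4 \<union> D2 \<union> (U - (S4 \<union> D2))"
    have z: "z \<in> R \<Longrightarrow> {c,z} \<in> D2 \<and> {a,z} \<in> D2" for z unfolding D2_def Bz_def by auto
    show "DD n a b c d E \<longleftrightarrow> (P1 (E \<inter> (S4 \<union> D2) \<inter> S4) \<and> P2 (E \<inter> (S4 \<union> D2) \<inter> D2)) \<and> True"
      unfolding DD_def P1_def P2_def using assms z
      by (auto simp: S4_def R_def Bz_def)
  qed
  also have "W p (U - (S4 \<union> D2)) (\<lambda>_. True) = 1"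
    by (rule W_true) (use fin_edges in \<open>auto simp: U_def\<close>)
  also have "W p (S4 \<union> D2) (\<lambda>F. P1 (F \<inter> S4) \<and> P2 (F \<inter> D2)) = W p S4 P1 * W p D2 P2"
    by (rule W_split) (use finS4 finD2 dj in auto)
  also have "W p S4 P1 = p ^ 4"
  proof -
    have "W p (\<Union>e\<in>S4. {e}) (\<lambda>F. \<forall>e\<in>S4. (\<lambda>e G. e \<in> G) e (F \<inter> {e})) = (\<Prod>e\<in>S4. W p {e} ((\<lambda>e G. e \<in> G) e))"
      by (rule W_blocks) (use finS4 in auto)
    moreover have "card S4 = 4" unfolding S4_def using assms by (auto simp: doubleton_eq_iff)
    ultimately show ?thesis unfolding P1_def by (simp add: W_single)
  qed
  also have "W p D2 P2 = (1 - p + p^2) ^ (n - 4)"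
  proof -
    have "W p (\<Union>z\<in>R. Bz z) (\<lambda>F. \<forall>z\<in>R. (\<lambda>z G. {c,z} \<in> G \<longrightarrow> {a,z} \<in> G) z (F \<inter> Bz z))
       = (\<Prod>z\<in>R. W p (Bz z) ((\<lambda>z G. {c,z} \<in> G \<longrightarrow> {a,z} \<in> G) z))"
    proof (rule W_blocks)
      show "finite R" by (rule finR)
      show "\<And>j. j \<in> R \<Longrightarrow> finite (Bz j)" unfolding Bz_def by auto
      show "\<And>i k. i \<in> R \<Longrightarrow> k \<in> R \<Longrightarrow> i \<noteq> k \<Longrightarrow> Bz i \<inter> Bz k = {}"
        unfolding Bz_def R_def using assms by (auto simp: doubleton_eq_iff)
    qed
    moreover have "W p (Bz z) (\<lambda>G. {c,z} \<in> G \<longrightarrow> {a,z} \<in> G) = 1 - p + p^2" if "z \<in> R" for z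
      unfolding Bz_def by (rule W_pair) (use that assms in \<open>auto simp: R_def doubleton_eq_iff\<close>)
    moreover have "card R = n - 4" unfolding R_def using assms by (simp add: card_Diff_subset)
    ultimately show ?thesis unfolding P2_def D2_def by simp
  qed
  finally show ?thesis unfolding U_def by simp
qed


lemma W_has_bound:
  assumes p: "0 < p" "p \<le> 1/2" and n: "4 \<le> n"
  shows "W p (all_edges n) (has_dom_diamond n) \<le> exp 1 * (real n * p)^4 * exp (- (real n * p) / 2)"
proof -
  define I where "I = {..<n} \<times> {..<n} \<times> {..<n} \<times> {..<(n::nat)}"
  define P where "P = (\<lambda>i E. case i of (a,b,c,d) \<Rightarrow> DD n a b c d E)"
  define q where "q = 1 - p + p^2"
  have p01: "0 \<le> p" "p \<le> 1" using p by auto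
  have q0: "0 \<le> q" unfolding q_def using p by (simp add: add_nonneg_nonneg)
  have "W p (all_edges n) (has_dom_diamond n) \<le> W p (all_edges n) (\<lambda>E. \<exists>i\<in>I. P i E)"
    by (rule W_mono[OF p01]) (use has_DD in \<open>auto simp: I_def P_def\<close>)
  also have "\<dots> \<le> (\<Sum>i\<in>I. W p (all_edges n) (P i))"
    by (rule W_union[OF p01]) (auto simp: I_def fin_edges)
  also have "\<dots> \<le> (\<Sum>i\<in>I. p^4 * q^(n-4))"
  proof (rule sum_mono)
    fix i assume "i \<in> I"
    then obtain a b c d where i: "i = (a,b,c,d)" "a < n" "b < n" "c < n" "d < n"
      unfolding I_def by auto
    show "W p (all_edges n) (P i) \<le> p^4 * q^(n-4)"
    proof (cases "distinct [a,b,c,d]")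
      case True
      then show ?thesis using W_DD[OF i(2-5) True, of p] i unfolding P_def q_def by simp
    next
      case False
      then have "W p (all_edges n) (P i) = 0" unfolding W_def P_def i DD_def
        by (intro sum.neutral) auto
      then show ?thesis using p q0 by simp
    qed
  qed
  also have "\<dots> = real n ^ 4 * p^4 * q^(n-4)" by (simp add: I_def card_cartesian_product power4_eq_xxxx)
  also have "\<dots> \<le> real n ^ 4 * p^4 * exp (-p/2) ^ (n-4)"
  proof -
    have "p^2 \<le> p * (1/2)" unfolding power2_eq_square using p by (intro mult_left_mono) auto
    then have "q \<le> 1 + (-p/2)" unfolding q_def by simp
    also have "\<dots> \<le> exp (-p/2)" by (rule exp_ge_add_one_self)
    finally have "q ^ (n-4) \<le> exp (-p/2) ^ (n-4)" by (intro power_mono q0)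
    then show ?thesis using p by (intro mult_left_mono) auto
  qed
  also have "\<dots> \<le> real n ^ 4 * p^4 * (exp 1 * exp (- (real n * p) / 2))"
  proof -
    have "exp (-p/2) ^ (n-4) = exp (- (real n * p) / 2 + 2 * p)"
      using n by (simp add: exp_of_nat_mult[symmetric] of_nat_diff algebra_simps)
    also have "\<dots> \<le> exp (- (real n * p) / 2 + 1)" using p by simp
    also have "\<dots> = exp 1 * exp (- (real n * p) / 2)" by (subst exp_add[symmetric]) simp
    finally show ?thesis using p by (intro mult_left_mono) auto
  qed
  finally show ?thesis by (simp add: power_mult_distrib algebra_simps)
qed

lemma aux_lim: "((\<lambda>x::real. exp 1 * x^4 * exp (- x / 2)) \<longlongrightarrow> 0) at_top"
  by real_asymp

theorem proposition2p12:
  fixes p :: "nat \<Rightarrow> real"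
  assumes "p \<longlonglongrightarrow> 0"
    and "filterlim (\<lambda>n. real n * p n) at_top sequentially"
  shows "(\<lambda>n. Gnp_prob n (p n) (\<lambda>E. \<not> has_dom_diamond n E)) \<longlonglongrightarrow> 1"
proof -
  have ev1: "eventually (\<lambda>n. p n \<le> 1/2) sequentially"
    using order_tendstoD(2)[OF assms(1), of "1/2"] by (auto elim: eventually_mono)
  have ev2: "eventually (\<lambda>n. real n * p n > 0) sequentially"
    using assms(2) by (simp add: filterlim_at_top_dense)
  have ev3: "eventually (\<lambda>n. 4 \<le> n) sequentially" by (rule eventually_ge_at_top)
  have ev: "eventually (\<lambda>n. 0 < p n \<and> p n \<le> 1/2 \<and> 4 \<le> n) sequentially"
    using ev1 ev2 ev3
  proof eventually_elim
    case (elim n)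
    then show ?case by (simp add: zero_less_mult_iff)
  qed
  have g: "(\<lambda>n. exp 1 * (real n * p n)^4 * exp (- (real n * p n) / 2)) \<longlonglongrightarrow> 0"
    using filterlim_compose[OF aux_lim assms(2)] by (simp add: o_def)
  have W0: "(\<lambda>n. W (p n) (all_edges n) (has_dom_diamond n)) \<longlonglongrightarrow> 0"
  proof (rule tendsto_sandwich[OF _ _ tendsto_const g])
    show "eventually (\<lambda>n. 0 \<le> W (p n) (all_edges n) (has_dom_diamond n)) sequentially"
      using ev by eventually_elim (auto intro: W_nonneg)
    show "eventually (\<lambda>n. W (p n) (all_edges n) (has_dom_diamond n) \<le> exp 1 * (real n * p n)^4 * exp (- (real n * p n) / 2)) sequentially"
      using ev by eventually_elim (rule W_has_bound, auto)
  qed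
  have eq: "Gnp_prob n (p n) (\<lambda>E. \<not> has_dom_diamond n E) = 1 - W (p n) (all_edges n) (has_dom_diamond n)" for n
    by (simp add: Gnp_W W_compl fin_edges)
  show ?thesis unfolding eq using tendsto_diff[OF tendsto_const W0, of 1] by simp
qed

end
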